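(* Let $N\le V$ be a subspace such that there is an $X\in\mathcal G$ with $X\le N$ and $\dim(N/X)=1$, and let $\mathcal G\langle N]:=\{E\le V\mid E\le N \text{ and } \dim(N/E)=1\}$ (the top with carrier $N$). Then: (1) $\mathcal G\langle N]\subseteq\mathcal G$; (2) any two distinct elements $E,E'\in\mathcal G\langle N]$ are adjacent; (3) two adjacent elements $E,E'\in\mathcal G$ both belong to $\mathcal G\langle N]$ if and only if $E+E'=N$.
   Context: $K$ is a (not necessarily commutative) field and $V$ is a left vector space over $K$ of arbitrary (possibly infinite) dimension with $\dim V>2$. $\mathcal G:=\{X\le V\mid X\cong V/X\}$ is the set of subspaces of $V$ isomorphic (as $K$-vector spaces) to their quotient space, assumed nonempty. Dimensions are vector space dimensions. Two elements $X,Y\in\mathcal G$ are called adjacent if $\dim((X+Y)/X)=\dim((X+Y)/Y)=1$, equivalently $\dim(X/(X\cap Y))=\dim(Y/(X\cap Y))=1$. *)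

theory Defs
  imports Main
begin

text \<open>Left vector space over a (not necessarily commutative) field K, i.e. a division ring.
  The ambient space V is the whole carrier type 'v; scalar multiplication is s.\<close>

definition left_vector_space :: "('k::division_ring \<Rightarrow> 'v::ab_group_add \<Rightarrow> 'v) \<Rightarrow> bool" where
  "left_vector_space s \<longleftrightarrow>
     (\<forall>a x y. s a (x + y) = s a x + s a y) \<and>
     (\<forall>a b x. s (a + b) x = s a x + s b x) \<and>
     (\<forall>a b x. s (a * b) x = s a (s b x)) \<and>
     (\<forall>x. s 1 x = x)"

definition subspace :: "('k::division_ring \<Rightarrow> 'v::ab_group_add \<Rightarrow> 'v) \<Rightarrow> 'v set \<Rightarrow> bool" where
  "subspace s X \<longleftrightarrow> 0 \<in> X \<and> (\<forall>x\<in>X. \<forall>y\<in>X. x + y \<in> X) \<and> (\<forall>c. \<forall>x\<in>X. s c x \<in> X)"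

definition dim_gt_2 :: "('k::division_ring \<Rightarrow> 'v::ab_group_add \<Rightarrow> 'v) \<Rightarrow> bool" where
  "dim_gt_2 s \<longleftrightarrow> (\<exists>u v w. \<forall>a b c. s a u + s b v + s c w = 0 \<longrightarrow> a = 0 \<and> b = 0 \<and> c = 0)"

definition ssum :: "'v::ab_group_add set \<Rightarrow> 'v set \<Rightarrow> 'v set" where
  "ssum X Y = {x + y | x y. x \<in> X \<and> y \<in> Y}"

definition coset :: "'v::ab_group_add set \<Rightarrow> 'v \<Rightarrow> 'v set" where
  "coset X v = (\<lambda>x. v + x) ` X"

text \<open>phi is a K-linear isomorphism from X onto the quotient space V/X
  (quotient operations computed on representatives).\<close>
definition quot_iso :: "('k::division_ring \<Rightarrow> 'v::ab_group_add \<Rightarrow> 'v) \<Rightarrow> 'v set \<Rightarrow> ('v \<Rightarrow> 'v set) \<Rightarrow> bool" where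
  "quot_iso s X \<phi> \<longleftrightarrow>
     bij_betw \<phi> X (range (coset X)) \<and>
     (\<forall>x\<in>X. \<forall>y\<in>X. \<forall>a\<in>\<phi> x. \<forall>b\<in>\<phi> y. \<phi> (x + y) = coset X (a + b)) \<and>
     (\<forall>c. \<forall>x\<in>X. \<forall>a\<in>\<phi> x. \<phi> (s c x) = coset X (s c a))"

definition Gr :: "('k::division_ring \<Rightarrow> 'v::ab_group_add \<Rightarrow> 'v) \<Rightarrow> 'v set set" where
  "Gr s = {X. subspace s X \<and> (\<exists>\<phi>. quot_iso s X \<phi>)}"

definition codim1 :: "('k::division_ring \<Rightarrow> 'v::ab_group_add \<Rightarrow> 'v) \<Rightarrow> 'v set \<Rightarrow> 'v set \<Rightarrow> bool" where
  "codim1 s E N \<longleftrightarrow> E \<subseteq> N \<and> (\<exists>v\<in>N. v \<notin> E \<and> N = {e + s c v | e c. e \<in> E})"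

definition adjacent :: "('k::division_ring \<Rightarrow> 'v::ab_group_add \<Rightarrow> 'v) \<Rightarrow> 'v set \<Rightarrow> 'v set \<Rightarrow> bool" where
  "adjacent s X Y \<longleftrightarrow> codim1 s X (ssum X Y) \<and> codim1 s Y (ssum X Y)"

definition top_of :: "('k::division_ring \<Rightarrow> 'v::ab_group_add \<Rightarrow> 'v) \<Rightarrow> 'v set \<Rightarrow> 'v set set" where
  "top_of s N = {E. subspace s E \<and> E \<subseteq> N \<and> codim1 s E N}"

end

theory Submission
  imports Defs
begin

locale lvs = fixes s :: "'k::division_ring \<Rightarrow> 'v::ab_group_add \<Rightarrow> 'v"
  assumes lvs: "left_vector_space s"
begin
lemma sadd: "s a (x+y) = s a x + s a y" using lvs unfolding left_vector_space_def by blast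
lemma saddl: "s (a+b) x = s a x + s b x" using lvs unfolding left_vector_space_def by blast
lemma smult: "s (a*b) x = s a (s b x)" using lvs unfolding left_vector_space_def by blast
lemma sone[simp]: "s 1 x = x" using lvs unfolding left_vector_space_def by blast
lemma szr[simp]: "s a 0 = 0" using sadd[of a 0 0] by simp
lemma szl[simp]: "s 0 x = 0" using saddl[of 0 0 x] by simp
lemma snegr: "s a (-x) = - s a x" using sadd[of a x "-x"] by (metis add.commute add_eq_0_iff2 right_minus szr)
lemma snegl: "s (-a) x = - s a x" using saddl[of a "-a" x] by (metis add.commute add_eq_0_iff2 right_minus szl)
lemma sdiffr: "s a (x-y) = s a x - s a y" using sadd[of a x "-y"] snegr by simp
lemma sdiffl: "s (a-b) x = s a x - s b x" using saddl[of a "-b" x] snegl by simp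
lemma sinv1: "c \<noteq> 0 \<Longrightarrow> s (inverse c) (s c x) = x" by (simp flip: smult)
lemma sinv2: "c \<noteq> 0 \<Longrightarrow> s c (s (inverse c) x) = x" by (simp flip: smult)
lemma sm1[simp]: "s (-1) x = - x" by (simp add: snegl)

lemma sub0: "subspace s X \<Longrightarrow> 0 \<in> X" unfolding subspace_def by blast
lemma subadd: "subspace s X \<Longrightarrow> x \<in> X \<Longrightarrow> y \<in> X \<Longrightarrow> x + y \<in> X" unfolding subspace_def by blast
lemma subsc: "subspace s X \<Longrightarrow> x \<in> X \<Longrightarrow> s c x \<in> X" unfolding subspace_def by blast
lemma subneg: "subspace s X \<Longrightarrow> x \<in> X \<Longrightarrow> - x \<in> X" using subsc[of X x "-1"] by simp
lemma subdiff: "subspace s X \<Longrightarrow> x \<in> X \<Longrightarrow> y \<in> X \<Longrightarrow> x - y \<in> X"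
  using subadd[of X x "-y"] subneg by simp

definition spanx :: "'v set \<Rightarrow> 'v \<Rightarrow> 'v set" where
  "spanx E x = {e + s c x | e c. e \<in> E}"

lemma spanx_sub: assumes "subspace s E" shows "subspace s (spanx E x)"
  unfolding subspace_def spanx_def
proof (intro conjI ballI allI)
  show "0 \<in> {e + s c x |e c. e \<in> E}" using sub0[OF assms] by (intro CollectI exI[of _ 0]) auto
next
  fix a b assume "a \<in> {e + s c x |e c. e \<in> E}" "b \<in> {e + s c x |e c. e \<in> E}"
  then obtain e c e' c' where "a = e + s c x" "b = e' + s c' x" "e \<in> E" "e' \<in> E" by blast
  then have "a + b = (e+e') + s (c+c') x" "e + e' \<in> E" using saddl subadd[OF assms] by (auto simp: algebra_simps)
  then show "a + b \<in> {e + s c x |e c. e \<in> E}" by blast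
next
  fix a d assume "a \<in> {e + s c x |e c. e \<in> E}"
  then obtain e c where "a = e + s c x" "e \<in> E" by blast
  then have "s d a = s d e + s (d*c) x" "s d e \<in> E" using sadd smult subsc[OF assms] by auto
  then show "s d a \<in> {e + s c x |e c. e \<in> E}" by blast
qed

lemma inter:
  assumes "codim1 s E N" "subspace s M" "E \<subseteq> M" "M \<subseteq> N" "m \<in> M" "m \<notin> E"
  shows "M = N"
proof -
  obtain v where v: "v \<in> N" "v \<notin> E" "N = {e + s c v | e c. e \<in> E}" using assms(1) unfolding codim1_def by blast
  obtain e c where ec: "m = e + s c v" "e \<in> E" using assms(4,5) v(3) by blast
  have "c \<noteq> 0" using ec assms(6) by auto
  have "s c v = m - e" using ec by simp
  then have "v = s (inverse c) (m - e)" using sinv1[OF \<open>c \<noteq> 0\<close>, of v] by simp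
  then have "v \<in> M" using subsc[OF assms(2)] subdiff[OF assms(2)] assms(3,5) ec(2) by auto
  have "N \<subseteq> M"
  proof
    fix n assume "n \<in> N"
    then obtain e' c' where "n = e' + s c' v" "e' \<in> E" using v(3) by blast
    then show "n \<in> M" using \<open>v \<in> M\<close> subadd[OF assms(2)] subsc[OF assms(2)] assms(3) by auto
  qed
  then show ?thesis using assms(4) by blast
qed

lemma span_add:
  assumes "codim1 s E N" "subspace s E" "subspace s N" "x \<in> N" "x \<notin> E"
  shows "N = spanx E x"
proof -
  have EN: "E \<subseteq> N" using assms(1) unfolding codim1_def by blast
  show ?thesis
  proof (rule inter[OF assms(1) spanx_sub[OF assms(2)], symmetric])
    show "E \<subseteq> spanx E x" unfolding spanx_def by (force intro: exI[of _ 0])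
    show "spanx E x \<subseteq> N" unfolding spanx_def using EN subadd[OF assms(3)] subsc[OF assms(3)] assms(4) by auto
    show "x \<in> spanx E x" unfolding spanx_def using sub0[OF assms(2)] by (force intro: exI[of _ 1])
  qed (fact assms(5))
qed

lemma ssum_sub: assumes "subspace s E" "subspace s F" shows "subspace s (ssum E F)"
  unfolding subspace_def ssum_def
proof (intro conjI ballI allI)
  show "0 \<in> {x + y |x y. x \<in> E \<and> y \<in> F}" using sub0[OF assms(1)] sub0[OF assms(2)] by force
next
  fix a b assume "a \<in> {x + y |x y. x \<in> E \<and> y \<in> F}" "b \<in> {x + y |x y. x \<in> E \<and> y \<in> F}"
  then obtain e f e' f' where "a = e + f" "b = e' + f'" "e \<in> E" "e' \<in> E" "f \<in> F" "f' \<in> F" by blast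
  then have "a + b = (e+e') + (f + f')" "e + e' \<in> E" "f + f' \<in> F" using subadd[OF assms(1)] subadd[OF assms(2)] by (auto simp: algebra_simps)
  then show "a + b \<in> {x + y |x y. x \<in> E \<and> y \<in> F}" by blast
next
  fix a d assume "a \<in> {x + y |x y. x \<in> E \<and> y \<in> F}"
  then obtain e f where "a = e + f" "e \<in> E" "f \<in> F" by blast
  then have "s d a = s d e + s d f" "s d e \<in> E" "s d f \<in> F" using sadd subsc[OF assms(1)] subsc[OF assms(2)] by auto
  then show "s d a \<in> {x + y |x y. x \<in> E \<and> y \<in> F}" by blast
qed

lemma ssum_comm: "ssum E F = ssum F E" unfolding ssum_def by (auto; metis add.commute)

lemma ssum_left: "subspace s F \<Longrightarrow> E \<subseteq> ssum E F" unfolding ssum_def using sub0 by force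

lemma top_sum:
  assumes "E \<in> top_of s N" "E' \<in> top_of s N" "subspace s N" "\<not> E' \<subseteq> E"
  shows "ssum E E' = N"
proof -
  have E: "subspace s E" "E \<subseteq> N" "codim1 s E N" and E': "subspace s E'" "E' \<subseteq> N" "codim1 s E' N"
    using assms unfolding top_of_def by auto
  obtain m where m: "m \<in> E'" "m \<notin> E" using assms(4) by blast
  show ?thesis
  proof (rule inter[OF E(3) ssum_sub[OF E(1) E'(1)] ssum_left[OF E'(1)]])
    show "ssum E E' \<subseteq> N" unfolding ssum_def using E E' subadd[OF assms(3)] by blast
    show "m \<in> ssum E E'" using ssum_left[OF E(1), of E'] m ssum_comm by blast
  qed (fact m(2))
qed

lemma not_sub:
  assumes "E \<in> top_of s N" "E' \<in> top_of s N" "E \<noteq> E'"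
  shows "\<not> E' \<subseteq> E"
proof
  assume sub: "E' \<subseteq> E"
  have E: "subspace s E" "E \<subseteq> N" "codim1 s E N" and E': "subspace s E'" "E' \<subseteq> N" "codim1 s E' N"
    using assms unfolding top_of_def by auto
  obtain m where "m \<in> E" "m \<notin> E'" using sub assms(3) by blast
  then have "E = N" using inter[OF E'(3) E(1) sub E(2)] by blast
  then show False using E(3) unfolding codim1_def by blast
qed

lemma part2:
  assumes "E \<in> top_of s N" "E' \<in> top_of s N" "E \<noteq> E'" "subspace s N"
  shows "adjacent s E E'"
proof -
  have "ssum E E' = N" using top_sum[OF assms(1,2,4) not_sub[OF assms(1-3)]] .
  moreover have "ssum E' E = N" using top_sum[OF assms(2,1,4) not_sub[OF assms(2,1)]] assms(3) by auto
  ultimately show ?thesis using assms(1,2) unfolding adjacent_def top_of_def by (auto simp: ssum_comm)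
qed

lemma part3:
  assumes "E \<in> Gr s" "E' \<in> Gr s" "adjacent s E E'" "subspace s N"
  shows "(E \<in> top_of s N \<and> E' \<in> top_of s N) \<longleftrightarrow> ssum E E' = N"
proof -
  have sE: "subspace s E" "subspace s E'" using assms(1,2) unfolding Gr_def by auto
  have c: "codim1 s E (ssum E E')" "codim1 s E' (ssum E E')" using assms(3) unfolding adjacent_def by auto
  show ?thesis
  proof
    assume "E \<in> top_of s N \<and> E' \<in> top_of s N"
    moreover have "\<not> E' \<subseteq> E"
    proof
      assume "E' \<subseteq> E"
      then have "ssum E E' \<subseteq> E" unfolding ssum_def using subadd[OF sE(1)] by blast
      then show False using c(1) unfolding codim1_def by blast
    qed
    ultimately show "ssum E E' = N" using top_sum assms(4) by blast
  next
    assume "ssum E E' = N"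
    then show "E \<in> top_of s N \<and> E' \<in> top_of s N" using c sE unfolding top_of_def codim1_def by auto
  qed
qed

lemma transport:
  fixes \<tau> :: "'v \<Rightarrow> 'v"
  assumes tadd: "\<And>x y. \<tau> (x + y) = \<tau> x + \<tau> y" and tsc: "\<And>c x. \<tau> (s c x) = s c (\<tau> x)"
    and tb: "bij \<tau>" and tX: "\<tau> ` X = E" and sE: "subspace s E" and XG: "X \<in> Gr s"
  shows "E \<in> Gr s"
proof -
  obtain \<phi> where q: "quot_iso s X \<phi>" using XG unfolding Gr_def by blast
  define \<sigma> where "\<sigma> = inv \<tau>"
  have st: "\<sigma> (\<tau> x) = x" for x using tb unfolding \<sigma>_def by (simp add: bij_is_inj)
  have ts: "\<tau> (\<sigma> x) = x" for x using tb unfolding \<sigma>_def by (simp add: bij_is_surj surj_f_inv_f)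
  have sadd': "\<sigma> (x + y) = \<sigma> x + \<sigma> y" for x y by (metis st ts tadd)
  have ssc: "\<sigma> (s c x) = s c (\<sigma> x)" for c x by (metis st ts tsc)
  have sE': "e \<in> E \<Longrightarrow> \<sigma> e \<in> X" for e using tX st by auto
  have cos: "\<tau> ` coset X a = coset E (\<tau> a)" for a
    unfolding coset_def tX[symmetric] image_image tadd ..
  define \<psi> where "\<psi> e = \<tau> ` \<phi> (\<sigma> e)" for e
  have b1: "bij_betw \<sigma> E X"
    by (rule bij_betw_byWitness[where f'=\<tau>]) (use st ts tX in auto)
  have b2: "bij_betw \<phi> X (range (coset X))" using q unfolding quot_iso_def by blast
  have b3: "bij_betw ((`) \<tau>) (range (coset X)) (range (coset E))"
  proof (rule bij_betw_imageI)
    show "inj_on ((`) \<tau>) (range (coset X))" using tb by (intro inj_onI) (simp add: bij_is_inj inj_image_eq_iff)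
    show "(`) \<tau> ` range (coset X) = range (coset E)"
    proof
      show "(`) \<tau> ` range (coset X) \<subseteq> range (coset E)" using cos by auto
      show "range (coset E) \<subseteq> (`) \<tau> ` range (coset X)"
      proof
        fix A assume "A \<in> range (coset E)"
        then obtain a where "A = coset E a" by blast
        then have "A = \<tau> ` coset X (\<sigma> a)" using cos ts by simp
        then show "A \<in> (`) \<tau> ` range (coset X)" by blast
      qed
    qed
  qed
  have bij: "bij_betw \<psi> E (range (coset E))"
  proof -
    have "bij_betw ((`) \<tau> \<circ> (\<phi> \<circ> \<sigma>)) E (range (coset E))"
      by (rule bij_betw_trans[OF bij_betw_trans[OF b1 b2] b3])
    then show ?thesis unfolding \<psi>_def[abs_def] o_def .
  qed
  have add: "\<psi> (x + y) = coset E (a + b)" if H: "x \<in> E" "y \<in> E" "a \<in> \<psi> x" "b \<in> \<psi> y" for x y a b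
  proof -
    obtain a' b' where ab: "a' \<in> \<phi> (\<sigma> x)" "a = \<tau> a'" "b' \<in> \<phi> (\<sigma> y)" "b = \<tau> b'" using H unfolding \<psi>_def by blast
    have "\<phi> (\<sigma> x + \<sigma> y) = coset X (a' + b')" using q sE' H(1,2) ab unfolding quot_iso_def by blast
    then show ?thesis unfolding \<psi>_def sadd' ab by (simp add: cos tadd)
  qed
  have sc: "\<psi> (s c x) = coset E (s c a)" if H: "x \<in> E" "a \<in> \<psi> x" for x a c
  proof -
    obtain a' where ab: "a' \<in> \<phi> (\<sigma> x)" "a = \<tau> a'" using H unfolding \<psi>_def by blast
    have "\<phi> (s c (\<sigma> x)) = coset X (s c a')" using q sE' H(1) ab unfolding quot_iso_def by blast
    then show ?thesis unfolding \<psi>_def ssc ab by (simp add: cos tsc)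
  qed
  have "quot_iso s E \<psi>" unfolding quot_iso_def using bij add sc by blast
  then show ?thesis using sE unfolding Gr_def by blast
qed

lemma part1:
  assumes XG: "X \<in> Gr s" and sN: "subspace s N" and cX: "codim1 s X N" and EN: "E \<in> top_of s N"
  shows "E \<in> Gr s"
proof (cases "E = X")
  case True then show ?thesis using XG by simp
next
  case False
  have sX: "subspace s X" using XG unfolding Gr_def by blast
  have sE: "subspace s E" and cE: "codim1 s E N" using EN unfolding top_of_def by auto
  have XsN: "X \<subseteq> N" and EsN: "E \<subseteq> N" using cX cE unfolding codim1_def by auto
  have "\<not> E \<subseteq> X"
  proof
    assume sub: "E \<subseteq> X"
    obtain m where "m \<in> X" "m \<notin> E" using sub False by blast
    then have "X = N" using inter[OF cE sX sub XsN] by blast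
    then show False using cX unfolding codim1_def by blast
  qed
  then obtain e0 where e0: "e0 \<in> E" "e0 \<notin> X" by blast
  have "\<not> X \<subseteq> E"
  proof
    assume sub: "X \<subseteq> E"
    obtain m where "m \<in> E" "m \<notin> X" using sub False by blast
    then have "E = N" using inter[OF cX sE sub EsN] by blast
    then show False using cE unfolding codim1_def by blast
  qed
  then obtain x0 where x0: "x0 \<in> X" "x0 \<notin> E" by blast
  have NX: "N = spanx X e0" using span_add[OF cX sX sN] e0 EsN by blast
  have NE: "N = spanx E x0" using span_add[OF cE sE sN] x0 XsN by blast
  define W where "W = E \<inter> X"
  have sW: "subspace s W" using sE sX unfolding W_def subspace_def by auto
  have decX: "\<exists>w\<in>W. \<exists>c. x = w + s c x0" if xX0: "x \<in> X" for x
  proof -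
    obtain e c where "x = e + s c x0" "e \<in> E" using xX0 XsN NE unfolding spanx_def by blast
    moreover have "e = x - s c x0" using calculation(1) by (simp add: eq_diff_eq)
    moreover have "e \<in> X" using calculation(3) xX0 subdiff[OF sX xX0 subsc[OF sX x0(1)], of c] by simp
    ultimately show ?thesis unfolding W_def by blast
  qed
  have decE: "\<exists>w\<in>W. \<exists>c. x = w + s c e0" if xX0: "x \<in> E" for x
  proof -
    obtain e c where "x = e + s c e0" "e \<in> X" using xX0 EsN NX unfolding spanx_def by blast
    moreover have "e = x - s c e0" using calculation(1) by (simp add: eq_diff_eq)
    moreover have "e \<in> E" using calculation(3) xX0 subdiff[OF sE xX0 subsc[OF sE e0(1)], of c] by simp
    ultimately show ?thesis unfolding W_def by blast
  qed
  define u where "u = e0 - x0"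
  define A where "A = {H. subspace s H \<and> W \<subseteq> H \<and> u \<in> H \<and> x0 \<notin> H}"
  have UA: "spanx W u \<in> A"
    unfolding A_def
  proof (intro CollectI conjI)
    show "subspace s (spanx W u)" by (rule spanx_sub[OF sW])
    show "W \<subseteq> spanx W u" unfolding spanx_def by (force intro: exI[of _ 0])
    show "u \<in> spanx W u" unfolding spanx_def using sub0[OF sW] by (force intro: exI[of _ 1])
    show "x0 \<notin> spanx W u"
    proof
      assume "x0 \<in> spanx W u"
      then obtain w c where wc: "x0 = w + s c u" "w \<in> W" unfolding spanx_def by blast
      then have eq: "s (1 + c) x0 = w + s c e0" unfolding u_def sdiffr saddl by (simp add: algebra_simps)
      show False
      proof (cases "1 + c = 0")
        case True
        then have "c = -1" by (simp add: add_eq_0_iff)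
        then have "e0 = w" using eq True by simp
        then show False using wc e0 unfolding W_def by blast
      next
        case False
        have "x0 = s (inverse (1+c)) (w + s c e0)" using sinv1[OF False, of x0] eq by simp
        moreover have "w + s c e0 \<in> E" using wc(2) e0(1) subadd[OF sE] subsc[OF sE] unfolding W_def by blast
        ultimately show False using x0(2) subsc[OF sE, of "w + s c e0" "inverse (1+c)"] by simp
      qed
    qed
  qed
  have "\<exists>M\<in>A. \<forall>Y\<in>A. M \<subseteq> Y \<longrightarrow> Y = M"
  proof (rule subset_Zorn_nonempty)
    show "A \<noteq> {}" using UA by blast
    fix C assume Cne: "C \<noteq> {}" and ch: "subset.chain A C"
    then have CA: "C \<subseteq> A" and cmp: "\<forall>X\<in>C. \<forall>Y\<in>C. X \<subseteq> Y \<or> Y \<subseteq> X" unfolding subset_chain_def by simp_all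
    have CS: "\<And>H. H \<in> C \<Longrightarrow> subspace s H \<and> W \<subseteq> H \<and> u \<in> H \<and> x0 \<notin> H" using CA unfolding A_def by blast
    have sub: "subspace s (\<Union>C)" unfolding subspace_def
    proof (intro conjI ballI allI)
      obtain H0 where "H0 \<in> C" using Cne by blast
      then show "0 \<in> \<Union>C" using CS sub0 by blast
      fix x y assume "x \<in> \<Union>C" "y \<in> \<Union>C"
      then obtain H1 H2 where "x \<in> H1" "y \<in> H2" "H1 \<in> C" "H2 \<in> C" by blast
      then have "x \<in> H1 \<and> y \<in> H1 \<or> x \<in> H2 \<and> y \<in> H2" using cmp by blast
      then show "x + y \<in> \<Union>C" using CS subadd \<open>H1 \<in> C\<close> \<open>H2 \<in> C\<close> by blast
    next
      fix c x assume "x \<in> \<Union>C"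
      then obtain H1 where "x \<in> H1" "H1 \<in> C" by blast
      then show "s c x \<in> \<Union>C" using CS subsc by blast
    qed
    obtain H0 where "H0 \<in> C" using Cne by blast
    then have "W \<subseteq> \<Union>C" "u \<in> \<Union>C" using CS by blast+
    moreover have "x0 \<notin> \<Union>C" using CS by blast
    ultimately show "\<Union>C \<in> A" unfolding A_def using sub by blast
  qed
  then obtain H where HA: "H \<in> A" and Hmax: "\<And>Y. Y \<in> A \<Longrightarrow> H \<subseteq> Y \<Longrightarrow> Y = H" by blast
  have sH: "subspace s H" and WH: "W \<subseteq> H" and uH: "u \<in> H" and x0H: "x0 \<notin> H" using HA unfolding A_def by auto
  have tot: "\<exists>h\<in>H. \<exists>c. v = h + s c x0" for v
  proof (rule ccontr)
    assume nv: "\<not> (\<exists>h\<in>H. \<exists>c. v = h + s c x0)"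
    have "spanx H v \<in> A" unfolding A_def
    proof (intro CollectI conjI)
      show "subspace s (spanx H v)" by (rule spanx_sub[OF sH])
      have "H \<subseteq> spanx H v" unfolding spanx_def by (force intro: exI[of _ 0])
      then show "W \<subseteq> spanx H v" "u \<in> spanx H v" using WH uH by auto
      show "x0 \<notin> spanx H v"
      proof
        assume "x0 \<in> spanx H v"
        then obtain h c where hc: "x0 = h + s c v" "h \<in> H" unfolding spanx_def by blast
        show False
        proof (cases "c = 0")
          case True then show False using hc x0H by simp
        next
          case False
          have "s c v = x0 - h" using hc by simp
          then have "v = s (inverse c) (x0 - h)" using sinv1[OF False, of v] by simp
          then have "v = (- s (inverse c) h) + s (inverse c) x0" by (simp add: sdiffr)
          moreover have "- s (inverse c) h \<in> H" using subneg[OF sH subsc[OF sH hc(2)]] .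
          ultimately show False using nv by blast
        qed
      qed
    qed
    moreover have "H \<subseteq> spanx H v" unfolding spanx_def by (force intro: exI[of _ 0])
    ultimately have "spanx H v = H" using Hmax by blast
    moreover have "v \<in> spanx H v" unfolding spanx_def using sub0[OF sH] by (force intro: exI[of _ 1])
    moreover have "v \<notin> H" using nv by (metis add.right_neutral szl)
    ultimately show False by blast
  qed
  have uniq: "c = c'" if "h \<in> H" "h' \<in> H" "h + s c x0 = h' + s c' x0" for h h' c c'
  proof (rule ccontr)
    assume ne: "c \<noteq> c'"
    then have ne': "c - c' \<noteq> 0" by simp
    have "s (c - c') x0 = h' - h" using that(3) unfolding sdiffl by (simp add: algebra_simps)
    then have "x0 = s (inverse (c - c')) (h' - h)" using sinv1[OF ne', of x0] by simp
    then show False using x0H subsc[OF sH subdiff[OF sH that(2,1)], of "inverse (c - c')"] by simp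
  qed
  define f where "f v = (THE c. \<exists>h\<in>H. v = h + s c x0)" for v
  have feq: "f (h + s c x0) = c" if "h \<in> H" for h c
    unfolding f_def
  proof (rule the_equality)
    show "\<exists>h'\<in>H. h + s c x0 = h' + s c x0" using that by blast
    fix c' assume "\<exists>h'\<in>H. h + s c x0 = h' + s c' x0"
    then obtain h' where "h' \<in> H" "h + s c x0 = h' + s c' x0" by blast
    then show "c' = c" using uniq[OF that \<open>h' \<in> H\<close>] by auto
  qed
  have fdec: "\<exists>h\<in>H. v = h + s (f v) x0" for v
  proof -
    obtain h c where "h \<in> H" "v = h + s c x0" using tot[of v] by blast
    moreover then have "f v = c" using feq[of h c] by simp
    ultimately show ?thesis by auto
  qed
  have fH: "f h = 0" if "h \<in> H" for h using feq[OF that, of 0] by simp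
  have fadd: "f (x + y) = f x + f y" for x y
  proof -
    obtain h1 h2 where hh: "h1 \<in> H" "h2 \<in> H" and ex: "x = h1 + s (f x) x0" and ey: "y = h2 + s (f y) x0" using fdec by metis
    have "x + y = (h1 + s (f x) x0) + (h2 + s (f y) x0)" by (rule arg_cong2[OF ex ey])
    also have "\<dots> = (h1 + h2) + s (f x + f y) x0" by (simp add: saddl algebra_simps)
    finally have "x + y = (h1 + h2) + s (f x + f y) x0" "h1 + h2 \<in> H" using subadd[OF sH hh] by auto
    then show ?thesis using feq[of "h1 + h2" "f x + f y"] by simp
  qed
  have fsc: "f (s a x) = a * f x" for a x
  proof -
    obtain h1 where hh: "h1 \<in> H" and ex: "x = h1 + s (f x) x0" using fdec by metis
    have "s a x = s a (h1 + s (f x) x0)" by (rule arg_cong[OF ex])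
    also have "\<dots> = s a h1 + s (a * f x) x0" by (simp add: sadd smult)
    finally have "s a x = s a h1 + s (a * f x) x0" "s a h1 \<in> H" using subsc[OF sH hh] by auto
    then show ?thesis using feq[of "s a h1" "a * f x"] by simp
  qed
  define \<tau> where "\<tau> v = v + s (f v) u" for v
  define \<sigma> where "\<sigma> v = v - s (f v) u" for v
  have fu: "f u = 0" using fH uH .
  have tadd: "\<tau> (x + y) = \<tau> x + \<tau> y" for x y unfolding \<tau>_def fadd saddl by (simp add: algebra_simps)
  have tsc: "\<tau> (s a x) = s a (\<tau> x)" for a x unfolding \<tau>_def fsc sadd smult ..
  have ft: "f (\<tau> v) = f v" for v unfolding \<tau>_def fadd fsc fu by simp
  have fs: "f (\<sigma> v) = f v" for v unfolding \<sigma>_def diff_conv_add_uminus fadd snegl[symmetric] fsc fu by simp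
  have tb: "bij \<tau>"
  proof (rule bij_betw_byWitness[where f'=\<sigma>])
    have "\<sigma> (\<tau> v) = v" for v using ft[of v] unfolding \<sigma>_def by (simp add: \<tau>_def)
    moreover have "\<tau> (\<sigma> v) = v" for v using fs[of v] unfolding \<tau>_def by (simp add: \<sigma>_def)
    ultimately show "\<forall>a\<in>UNIV. \<sigma> (\<tau> a) = a" "\<forall>a'\<in>UNIV. \<tau> (\<sigma> a') = a'" "\<tau> ` UNIV \<subseteq> UNIV" "\<sigma> ` UNIV \<subseteq> UNIV" by auto
  qed
  have tX: "\<tau> ` X = E"
  proof
    show "\<tau> ` X \<subseteq> E"
    proof
      fix y assume "y \<in> \<tau> ` X"
      then obtain x where "x \<in> X" "y = \<tau> x" by blast
      then obtain w c where wc: "w \<in> W" "x = w + s c x0" using decX by blast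
      then have "f x = c" using feq[of w c] WH by auto
      then have "y = w + s c e0" using wc \<open>y = \<tau> x\<close> unfolding \<tau>_def u_def sdiffr by simp
      then show "y \<in> E" using wc(1) e0(1) subadd[OF sE] subsc[OF sE] unfolding W_def by blast
    qed
    show "E \<subseteq> \<tau> ` X"
    proof
      fix y assume "y \<in> E"
      then obtain w c where wc: "w \<in> W" "y = w + s c e0" using decE by blast
      have xX: "w + s c x0 \<in> X" using wc(1) x0(1) subadd[OF sX] subsc[OF sX] unfolding W_def by blast
      have "f (w + s c x0) = c" using feq[of w c] WH wc(1) by auto
      then have "\<tau> (w + s c x0) = y" using wc unfolding \<tau>_def u_def sdiffr by simp
      then show "y \<in> \<tau> ` X" using xX by blast
    qed
  qed
  show ?thesis by (rule transport[OF tadd tsc tb tX sE XG])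
qed

end

theorem lemma2p2:
  fixes s :: "'k::division_ring \<Rightarrow> 'v::ab_group_add \<Rightarrow> 'v"
    and N X :: "'v set"
  assumes "left_vector_space s"
    and "dim_gt_2 s"
    and "Gr s \<noteq> {}"
    and "subspace s N"
    and "X \<in> Gr s" and "X \<subseteq> N" and "codim1 s X N"
  shows "top_of s N \<subseteq> Gr s
    \<and> (\<forall>E\<in>top_of s N. \<forall>E'\<in>top_of s N. E \<noteq> E' \<longrightarrow> adjacent s E E')
    \<and> (\<forall>E\<in>Gr s. \<forall>E'\<in>Gr s. adjacent s E E' \<longrightarrow>
          ((E \<in> top_of s N \<and> E' \<in> top_of s N) \<longleftrightarrow> ssum E E' = N))"
proof -
  interpret lvs s by unfold_locales (fact assms(1))
  show ?thesis
    using part1[OF assms(5,4,7)] part2[OF _ _ _ assms(4)] part3[OF _ _ _ assms(4)] by blast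
qed

end
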